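(* (1) If $\rho<\operatorname{inj}(\Gamma,x)$, then $S^+(\ell,\rho,x)$ is $\delta$-separated with $\delta=2(\operatorname{inj}(\Gamma,x)-\rho)$. (2) If $\operatorname{inj}(\Gamma,x)\le\rho$, then $S^+(\ell,\rho,x)$ is not $\delta$-separated for any $\delta>0$.
   Context: $\mathbb{D}=\{z\in\mathbb{C}:|z|<1\}$ with hyperbolic metric $d$ induced by $ds=2|dz|/(1-|z|^2)$; geodesics are parametrised with unit speed and the normal bundle of an oriented geodesic is oriented by the standard orientation of $\mathbb{D}$ and that of the geodesic. Standing setting: $\Gamma$ is a cocompact Fuchsian group with fundamental domain $\tau$ a hyperbolic polygon whose side-pairing generators are none of them their own inverse; $\Sigma_\Gamma=\Gamma\backslash\mathbb{D}$; $\ell$ is a geodesic in $\mathbb{D}$ with unit-speed parametrisation $\kappa_\ell$ such that the image of $\{(\kappa_\ell(t),\kappa_\ell'(t))\}$ in $\operatorname{ST}(\Sigma_\Gamma)$ is a dense orbit of the geodesic flow; $x\in\tau^\circ$ and $\rho>0$. $\operatorname{inj}(\Gamma,x)=\frac12\inf\{d(y,z):y,z\in\Gamma(x),y\ne z\}$. For a geodesic $k$ with unit-speed parametrisation $\kappa$: $\overline{\mathcal{N}(k,\rho)}^+$ is the union of $\{y:d(y,k)<\rho\}$ with the component of its boundary on the positive side of $k$; $p_k$ is orthogonal projection onto $k$; $S^+(k,\rho,x)=\kappa^{-1}(p_k(\Gamma(x)\cap\overline{\mathcal{N}(k,\rho)}^+))\subseteq\mathbb{R}$. A set $S\subseteq\mathbb{R}$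 is $\delta$-separated if $|s-s'|\ge\delta$ for all distinct $s,s'\in S$. *)

theory Defs
  imports "HOL-Analysis.Analysis"
begin

definition disc :: "complex set" where
  "disc = ball 0 1"

text \<open>Hyperbolic distance induced by ds = 2|dz|/(1-|z|^2) (closed form).\<close>
definition hdist :: "complex \<Rightarrow> complex \<Rightarrow> real" where
  "hdist z w = arcosh (1 + 2 * (cmod (z - w))^2 / ((1 - (cmod z)^2) * (1 - (cmod w)^2)))"

text \<open>Orientation preserving isometries of the disc (elements of PSU(1,1)).\<close>
definition moeb :: "complex \<Rightarrow> complex \<Rightarrow> complex \<Rightarrow> complex" where
  "moeb a b z = (a * z + b) / (cnj b * z + cnj a)"

definition disc_aut :: "(complex \<Rightarrow> complex) \<Rightarrow> bool" where
  "disc_aut g \<longleftrightarrow> (\<exists>a b. (cmod a)^2 - (cmod b)^2 = 1 \<and> g = moeb a b)"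

text \<open>A Fuchsian group: a discrete group of orientation preserving isometries of the
  disc (group operations are taken on the disc).  Discreteness is expressed by the
  equivalent finiteness of all sets of elements with bounded displacement.\<close>
definition fuchsian :: "(complex \<Rightarrow> complex) set \<Rightarrow> bool" where
  "fuchsian G \<longleftrightarrow>
     (\<forall>g\<in>G. disc_aut g) \<and> (\<lambda>z. z) \<in> G \<and>
     (\<forall>g\<in>G. \<forall>h\<in>G. \<exists>k\<in>G. \<forall>z\<in>disc. k z = g (h z)) \<and>
     (\<forall>g\<in>G. \<exists>k\<in>G. \<forall>z\<in>disc. k (g z) = z) \<and>
     (\<forall>z\<in>disc. \<forall>R. finite {g\<in>G. hdist (g z) z \<le> R})"

text \<open>Cocompact: the quotient of the disc by the group is compact, i.e. a compact
  subset of the disc meets every orbit.\<close>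
definition cocompact :: "(complex \<Rightarrow> complex) set \<Rightarrow> bool" where
  "cocompact G \<longleftrightarrow> (\<exists>K. compact K \<and> K \<subseteq> disc \<and> disc \<subseteq> (\<Union>g\<in>G. g ` K))"

definition orbit :: "(complex \<Rightarrow> complex) set \<Rightarrow> complex \<Rightarrow> complex set" where
  "orbit G x = (\<lambda>g. g x) ` G"

definition inj_rad :: "(complex \<Rightarrow> complex) set \<Rightarrow> complex \<Rightarrow> real" where
  "inj_rad G x = (1/2) * Inf {hdist y z | y z. y \<in> orbit G x \<and> z \<in> orbit G x \<and> y \<noteq> z}"

definition hseg :: "complex \<Rightarrow> complex \<Rightarrow> complex set" where
  "hseg p q = {z\<in>disc. hdist p z + hdist z q = hdist p q}"

definition hpolygon :: "complex set \<Rightarrow> complex set set \<Rightarrow> bool" where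
  "hpolygon T Sd \<longleftrightarrow>
     compact T \<and> T \<subseteq> disc \<and> interior T \<noteq> {} \<and>
     (\<forall>p\<in>T. \<forall>q\<in>T. hseg p q \<subseteq> T) \<and>
     finite Sd \<and> (\<forall>s\<in>Sd. \<exists>p\<in>disc. \<exists>q\<in>disc. p \<noteq> q \<and> s = hseg p q) \<and>
     frontier T = \<Union>Sd \<and>
     (\<forall>s\<in>Sd. \<forall>s'\<in>Sd. s \<noteq> s' \<longrightarrow> finite (s \<inter> s'))"

definition fundamental_domain :: "(complex \<Rightarrow> complex) set \<Rightarrow> complex set \<Rightarrow> bool" where
  "fundamental_domain G T \<longleftrightarrow>
     T \<subseteq> disc \<and> closed T \<and> (\<Union>g\<in>G. g ` T) = disc \<and>
     (\<forall>g\<in>G. (\<exists>z\<in>disc. g z \<noteq> z) \<longrightarrow> g ` interior T \<inter> interior T = {})"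

text \<open>The side-pairing element of a side s is the g with g(T) \<inter> T = s (it maps the side
  g^{-1}(s) onto s).  Every side is paired, and no side-pairing element is its own
  inverse.\<close>
definition side_pairing :: "(complex \<Rightarrow> complex) set \<Rightarrow> complex set \<Rightarrow> complex set set
    \<Rightarrow> (complex \<Rightarrow> complex) \<Rightarrow> bool" where
  "side_pairing G T Sd g \<longleftrightarrow> g \<in> G \<and> (\<exists>s\<in>Sd. g ` T \<inter> T = s)"

definition pairing_no_involution :: "(complex \<Rightarrow> complex) set \<Rightarrow> complex set \<Rightarrow> complex set set \<Rightarrow> bool" where
  "pairing_no_involution G T Sd \<longleftrightarrow>
     (\<forall>s\<in>Sd. \<exists>g\<in>G. g ` T \<inter> T = s \<and> {z\<in>disc. g z \<in> s} \<in> Sd) \<and>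
     (\<forall>g. side_pairing G T Sd g \<longrightarrow> (\<exists>z\<in>disc. g (g z) \<noteq> z))"

definition unit_geodesic :: "(real \<Rightarrow> complex) \<Rightarrow> bool" where
  "unit_geodesic \<kappa> \<longleftrightarrow> range \<kappa> \<subseteq> disc \<and> (\<forall>s t. hdist (\<kappa> s) (\<kappa> t) = \<bar>s - t\<bar>)"

definition unit_tangent :: "(complex \<times> complex) set" where
  "unit_tangent = {(z, v). z \<in> disc \<and> 2 * cmod v / (1 - (cmod z)^2) = 1}"

text \<open>The orbit of (kappa(t), kappa'(t)) is dense in ST(Gamma\D): equivalently, its
  Gamma-saturation (lift) is dense in the unit tangent bundle of the disc.\<close>
definition dense_geodesic :: "(complex \<Rightarrow> complex) set \<Rightarrow> (real \<Rightarrow> complex) \<Rightarrow> bool" where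
  "dense_geodesic G \<kappa> \<longleftrightarrow>
     unit_tangent \<subseteq> closure {(g (\<kappa> t), deriv g (\<kappa> t) * vector_derivative \<kappa> (at t)) | g t. g \<in> G}"

definition dist_geo :: "(real \<Rightarrow> complex) \<Rightarrow> complex \<Rightarrow> real" where
  "dist_geo \<kappa> y = (INF t. hdist y (\<kappa> t))"

definition proj_par :: "(real \<Rightarrow> complex) \<Rightarrow> complex \<Rightarrow> real" where
  "proj_par \<kappa> y = (THE t. \<forall>s. hdist y (\<kappa> t) \<le> hdist y (\<kappa> s))"

text \<open>Positive side: the component of disc minus the geodesic into which the positive
  normal i*kappa'(t) points (standard orientation of the disc).\<close>
definition pos_side :: "(real \<Rightarrow> complex) \<Rightarrow> complex set" where
  "pos_side \<kappa> = {y \<in> disc - range \<kappa>. \<exists>t e. e > 0 \<and>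
      (\<forall>\<epsilon>. 0 < \<epsilon> \<and> \<epsilon> < e \<longrightarrow>
         \<kappa> t + of_real \<epsilon> * \<i> * vector_derivative \<kappa> (at t)
           \<in> connected_component_set (disc - range \<kappa>) y)}"

definition nbhd_plus :: "(real \<Rightarrow> complex) \<Rightarrow> real \<Rightarrow> complex set" where
  "nbhd_plus \<kappa> \<rho> = {y\<in>disc. dist_geo \<kappa> y < \<rho>} \<union> {y\<in>disc. dist_geo \<kappa> y = \<rho> \<and> y \<in> pos_side \<kappa>}"

definition Splus :: "(complex \<Rightarrow> complex) set \<Rightarrow> (real \<Rightarrow> complex) \<Rightarrow> real \<Rightarrow> complex \<Rightarrow> real set" where
  "Splus G \<kappa> \<rho> x = proj_par \<kappa> ` (orbit G x \<inter> nbhd_plus \<kappa> \<rho>)"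

definition separated :: "real \<Rightarrow> real set \<Rightarrow> bool" where
  "separated \<delta> S \<longleftrightarrow> (\<forall>s\<in>S. \<forall>s'\<in>S. s \<noteq> s' \<longrightarrow> \<bar>s - s'\<bar> \<ge> \<delta>)"

end

theory Submission
  imports Defs
begin


definition harg :: "complex \<Rightarrow> complex \<Rightarrow> real" where
  "harg y z = 1 + 2 * (cmod (y - z))^2 / ((1 - (cmod y)^2) * (1 - (cmod z)^2))"

lemma disc_iff: "z \<in> disc \<longleftrightarrow> cmod z < 1"
  by (simp add: disc_def)

lemma disc_sq: "z \<in> disc \<Longrightarrow> (cmod z)^2 < 1"
  by (simp add: disc_def abs_square_less_1)

lemma hdist_harg: "hdist y z = arcosh (harg y z)"
  by (simp add: hdist_def harg_def)

lemma harg_ge1: "y \<in> disc \<Longrightarrow> z \<in> disc \<Longrightarrow> harg y z \<ge> 1"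
  using disc_sq[of y] disc_sq[of z] by (simp add: harg_def)

lemma hdist_nonneg: "y \<in> disc \<Longrightarrow> z \<in> disc \<Longrightarrow> hdist y z \<ge> 0"
  using harg_ge1 by (simp add: hdist_harg)

lemma cosh_hdist: "y \<in> disc \<Longrightarrow> z \<in> disc \<Longrightarrow> cosh (hdist y z) = harg y z"
  using harg_ge1 by (simp add: hdist_harg)

lemma hdist_less_iff:
  assumes "a \<in> disc" "b \<in> disc" "c \<in> disc" "d \<in> disc"
  shows "hdist a b < hdist c d \<longleftrightarrow> harg a b < harg c d"
  using harg_ge1 assms by (simp add: hdist_harg)

lemma hdist_le_iff:
  assumes "a \<in> disc" "b \<in> disc" "c \<in> disc" "d \<in> disc"
  shows "hdist a b \<le> hdist c d \<longleftrightarrow> harg a b \<le> harg c d"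
  using hdist_less_iff[of c d a b] assms by (meson not_le)

lemma hdist_eq_iff:
  assumes "a \<in> disc" "b \<in> disc" "c \<in> disc" "d \<in> disc"
  shows "hdist a b = hdist c d \<longleftrightarrow> harg a b = harg c d"
  using hdist_le_iff[of a b c d] hdist_le_iff[of c d a b] assms by auto

lemma harg_sym: "harg y z = harg z y"
  by (simp add: harg_def norm_minus_commute mult.commute)

lemma hdist_sym: "hdist y z = hdist z y"
  by (simp add: hdist_harg harg_sym)

lemma hdist_self: "hdist y y = 0"
  by (simp add: hdist_harg harg_def)

lemma hdist_zero_iff: "y \<in> disc \<Longrightarrow> z \<in> disc \<Longrightarrow> hdist y z = 0 \<longleftrightarrow> y = z"
proof
  assume "y \<in> disc" "z \<in> disc" "hdist y z = 0"
  then have "harg y z = 1" using harg_ge1 by (simp add: hdist_harg)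
  moreover have "(1 - (cmod y)^2) * (1 - (cmod z)^2) > 0"
    using \<open>y\<in>disc\<close> \<open>z\<in>disc\<close> disc_sq by simp
  ultimately have "(cmod (y - z))^2 = 0" unfolding harg_def by (auto simp add: divide_eq_0_iff)
  then show "y = z" by simp
qed (simp add: hdist_self)

section \<open>Moebius maps\<close>

definition nrm :: "complex \<Rightarrow> complex \<Rightarrow> bool" where
  "nrm a b \<longleftrightarrow> (cmod a)^2 - (cmod b)^2 = 1"

lemma nrm_cx: "nrm a b \<Longrightarrow> a * cnj a - b * cnj b = 1"
proof -
  assume "nrm a b"
  then have "complex_of_real ((cmod a)^2 - (cmod b)^2) = 1" by (simp add: nrm_def)
  then show ?thesis by (simp only: of_real_diff complex_norm_square)
qed

lemma nrm_less: "nrm a b \<Longrightarrow> cmod b < cmod a"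
  unfolding nrm_def by (smt (verit, best) norm_ge_zero power_mono)

lemma moeb_den_nz:
  assumes "nrm a b" "z \<in> disc"
  shows "cnj b * z + cnj a \<noteq> 0"
proof
  assume "cnj b * z + cnj a = 0"
  then have "cmod (cnj a) = cmod (cnj b * z)" by (metis add_eq_0_iff norm_minus_cancel)
  also have "\<dots> \<le> cmod b" using assms(2) by (simp add: norm_mult disc_iff mult_left_le)
  finally show False using nrm_less[OF assms(1)] by simp
qed

lemma moeb_diff:
  assumes "nrm a b" "y \<in> disc" "z \<in> disc"
  shows "moeb a b y - moeb a b z = (y - z) / ((cnj b * y + cnj a) * (cnj b * z + cnj a))"
proof -
  have d: "a * cnj a - b * cnj b = 1" using nrm_cx[OF assms(1)] .
  have ny: "cnj b * y + cnj a \<noteq> 0" and nz: "cnj b * z + cnj a \<noteq> 0"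
    using moeb_den_nz assms by auto
  have "(a * y + b) * (cnj b * z + cnj a) - (a * z + b) * (cnj b * y + cnj a) = (y - z) * (a * cnj a - b * cnj b)"
    by (simp add: algebra_simps)
  then show ?thesis using ny nz d unfolding moeb_def by (simp add: field_simps)
qed

lemma moeb_den_sq:
  assumes "nrm a b"
  shows "(cmod (cnj b * z + cnj a))^2 - (cmod (a * z + b))^2 = 1 - (cmod z)^2"
proof -
  have d: "a * cnj a - b * cnj b = 1" using nrm_cx[OF assms(1)] .
  have "complex_of_real ((cmod (cnj b * z + cnj a))^2 - (cmod (a * z + b))^2)
      = (cnj b * z + cnj a) * cnj (cnj b * z + cnj a) - (a * z + b) * cnj (a * z + b)"
    by (simp only: of_real_diff complex_norm_square)
  also have "\<dots> = (a * cnj a - b * cnj b) * (1 - z * cnj z)" by (simp add: algebra_simps)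
  also have "\<dots> = 1 - z * cnj z" using d by simp
  also have "\<dots> = complex_of_real (1 - (cmod z)^2)" by (simp only: of_real_diff of_real_1 complex_norm_square)
  finally show ?thesis using of_real_eq_iff by blast
qed

lemma moeb_one_minus:
  assumes "nrm a b" "z \<in> disc"
  shows "1 - (cmod (moeb a b z))^2 = (1 - (cmod z)^2) / (cmod (cnj b * z + cnj a))^2"
proof -
  have nz: "cnj b * z + cnj a \<noteq> 0" using moeb_den_nz assms by auto
  have "cmod (moeb a b z) = cmod (a * z + b) / cmod (cnj b * z + cnj a)"
    by (simp add: moeb_def norm_divide)
  then have "(cmod (moeb a b z))^2 = (cmod (a * z + b))^2 / (cmod (cnj b * z + cnj a))^2"
    by (simp add: power_divide)
  moreover have "(cmod (cnj b * z + cnj a))^2 > 0" using nz by simp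
  ultimately show ?thesis using moeb_den_sq[OF assms(1), of z]
    by (simp add: field_simps)
qed

lemma moeb_disc:
  assumes "nrm a b" "z \<in> disc"
  shows "moeb a b z \<in> disc"
proof -
  have nz: "cnj b * z + cnj a \<noteq> 0" using moeb_den_nz assms by auto
  have "1 - (cmod (moeb a b z))^2 > 0"
    using moeb_one_minus[OF assms] disc_sq[OF assms(2)] nz by simp
  then show ?thesis unfolding disc_iff by (smt (verit) norm_ge_zero one_le_power)
qed

lemma harg_moeb:
  assumes "nrm a b" "y \<in> disc" "z \<in> disc"
  shows "harg (moeb a b y) (moeb a b z) = harg y z"
proof -
  let ?dy = "cnj b * y + cnj a" and ?dz = "cnj b * z + cnj a"
  have ny: "?dy \<noteq> 0" and nz: "?dz \<noteq> 0" using moeb_den_nz assms by auto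
  have 1: "cmod (moeb a b y - moeb a b z) = cmod (y - z) / (cmod ?dy * cmod ?dz)"
    using moeb_diff[OF assms] by (simp add: norm_divide norm_mult)
  have y1: "1 - (cmod y)^2 > 0" and z1: "1 - (cmod z)^2 > 0" using disc_sq assms by auto
  show ?thesis unfolding harg_def 1 moeb_one_minus[OF assms(1,2)] moeb_one_minus[OF assms(1,3)]
    using ny nz y1 z1 by (simp add: field_simps power_divide power_mult_distrib)
qed

lemma hdist_moeb:
  assumes "nrm a b" "y \<in> disc" "z \<in> disc"
  shows "hdist (moeb a b y) (moeb a b z) = hdist y z"
  using harg_moeb[OF assms] by (simp add: hdist_harg)

lemma nrm_inv: "nrm a b \<Longrightarrow> nrm (cnj a) (- b)"
  by (simp add: nrm_def)

lemma div_div_same: "(D::complex) \<noteq> 0 \<Longrightarrow> (X / D) / (Y / D) = X / Y"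
  by (cases "Y = 0") (simp_all add: field_simps)

lemma moeb_comp:
  assumes "nrm c d" "z \<in> disc"
  shows "moeb a b (moeb c d z) = moeb (a * c + b * cnj d) (a * d + b * cnj c) z"
proof -
  let ?N = "c * z + d" and ?D = "cnj d * z + cnj c"
  have nz: "?D \<noteq> 0" using moeb_den_nz assms by auto
  have 1: "a * (?N / ?D) + b = (a * ?N + b * ?D) / ?D" using nz by (simp add: field_simps)
  have 2: "cnj b * (?N / ?D) + cnj a = (cnj b * ?N + cnj a * ?D) / ?D" using nz by (simp add: field_simps)
  have "moeb a b (moeb c d z) = (a * ?N + b * ?D) / (cnj b * ?N + cnj a * ?D)"
    unfolding moeb_def 1 2 using div_div_same[OF nz] by simp
  also have "\<dots> = moeb (a * c + b * cnj d) (a * d + b * cnj c) z"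
    unfolding moeb_def by (simp add: algebra_simps)
  finally show ?thesis .
qed

lemma nrm_comp: "nrm a b \<Longrightarrow> nrm c d \<Longrightarrow> nrm (a * c + b * cnj d) (a * d + b * cnj c)"
proof -
  assume "nrm a b" "nrm c d"
  then have d1: "a * cnj a - b * cnj b = 1" and d2: "c * cnj c - d * cnj d = 1" using nrm_cx by auto
  have "complex_of_real ((cmod (a * c + b * cnj d))^2 - (cmod (a * d + b * cnj c))^2)
     = (a * cnj a - b * cnj b) * (c * cnj c - d * cnj d)"
    by (simp only: of_real_diff complex_norm_square) (simp add: algebra_simps)
  then have "complex_of_real ((cmod (a * c + b * cnj d))^2 - (cmod (a * d + b * cnj c))^2) = 1"
    using d1 d2 by simp
  then show ?thesis unfolding nrm_def using of_real_eq_1_iff by blast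
qed

lemma moeb_inv1:
  assumes "nrm a b" "z \<in> disc"
  shows "moeb (cnj a) (- b) (moeb a b z) = z"
proof -
  have d: "a * cnj a - b * cnj b = 1" using nrm_cx[OF assms(1)] .
  have "moeb (cnj a) (- b) (moeb a b z) = moeb (cnj a * a + (-b) * cnj b) (cnj a * b + (- b) * cnj a) z"
    using moeb_comp[OF assms] by simp
  also have "\<dots> = z" using d by (simp add: moeb_def algebra_simps)
  finally show ?thesis .
qed

lemma moeb_inv2:
  assumes "nrm a b" "z \<in> disc"
  shows "moeb a b (moeb (cnj a) (- b) z) = z"
  using moeb_inv1[OF nrm_inv[OF assms(1)] assms(2)] by simp

lemma disc_aut_nrm: "disc_aut g \<Longrightarrow> \<exists>a b. nrm a b \<and> g = moeb a b"
  by (auto simp: disc_aut_def nrm_def)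



lemma tanh_artanh_real:
  assumes "\<bar>x::real\<bar> < 1"
  shows "tanh (artanh x) = x"
proof -
  have q: "(1 + x) / (1 - x) > 0" using assms by (simp add: abs_less_iff)
  have "exp (- 2 * artanh x) = 1 / ((1 + x) / (1 - x))"
    unfolding artanh_def using q by (simp add: exp_minus exp_ln)
  also have "\<dots> = (1 - x) / (1 + x)" by simp
  finally have e: "exp (- 2 * artanh x) = (1 - x) / (1 + x)" .
  have "1 + x > 0" "1 - x > 0" using assms by (auto simp: abs_less_iff)
  then show ?thesis unfolding tanh_real_altdef e by (simp add: field_simps)
qed

definition tc :: "real \<Rightarrow> complex" where
  "tc s = complex_of_real (tanh (s / 2))"

lemma tc_disc: "tc s \<in> disc"
  using tanh_real_bounds[of "s/2"] by (simp add: tc_def disc_iff abs_less_iff)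

lemma of_real_disc: "\<bar>p\<bar> < 1 \<Longrightarrow> complex_of_real p \<in> disc"
  by (simp add: disc_iff)

lemma harg_real: "harg (complex_of_real p) (complex_of_real q) = 1 + 2 * (p - q)^2 / ((1 - p^2) * (1 - q^2))"
  by (simp add: harg_def flip: of_real_diff)

lemma harg_tc: "harg (tc s) (tc t) = cosh (s - t)"
proof -
  let ?a = "s/2" and ?b = "t/2"
  have ca: "cosh ?a > 0" and cb: "cosh ?b > 0" by auto
  have 1: "1 - tanh x ^ 2 = 1 / cosh x ^ 2" for x :: real
  proof -
    have c: "cosh x ^ 2 > 0" by simp
    have "1 - tanh x ^ 2 = (cosh x ^ 2 - sinh x ^ 2) / cosh x ^ 2"
      unfolding tanh_def using c by (simp add: power_divide diff_divide_distrib)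
    also have "cosh x ^ 2 - sinh x ^ 2 = 1" using cosh_square_eq[of x] by simp
    finally show ?thesis .
  qed
  have 2: "tanh ?a - tanh ?b = sinh (?a - ?b) / (cosh ?a * cosh ?b)"
    unfolding tanh_def sinh_diff using ca cb by (simp add: field_simps)
  have "harg (tc s) (tc t) = 1 + 2 * (sinh (?a - ?b))^2"
    unfolding tc_def harg_real 1 2 using ca cb by (simp add: field_simps power2_eq_square)
  also have "\<dots> = cosh (2 * (?a - ?b))" using cosh_double[of "?a - ?b"] cosh_square_eq[of "?a - ?b"] by simp
  also have "2 * (?a - ?b) = s - t" by simp
  finally show ?thesis .
qed

lemma hdist_tc: "hdist (tc s) (tc t) = \<bar>s - t\<bar>"
proof -
  have e: "cosh (s - t) = cosh \<bar>s - t\<bar>" by (simp add: abs_real_def)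
  show ?thesis unfolding hdist_harg harg_tc e by (rule arcosh_cosh_real) simp
qed

lemma unit_geodesic_tc: "unit_geodesic tc"
  unfolding unit_geodesic_def using tc_disc hdist_tc by auto

lemma harg_0: "harg 0 u = 1 + 2 * (cmod u)^2 / (1 - (cmod u)^2)"
  by (simp add: harg_def)

lemma aux1: "(m::real) \<noteq> 1 \<Longrightarrow> (1 + 2 * m / (1 - m))^2 - 1 = 4 * m / (1 - m)^2"
proof -
  assume "m \<noteq> 1"
  then have k: "1 - m \<noteq> 0" by simp
  have "1 + 2 * m / (1 - m) = (1 + m) / (1 - m)" using k by (simp add: divide_simps)
  then have "(1 + 2 * m / (1 - m))^2 - 1 = ((1 + m)^2 - (1 - m)^2) / (1 - m)^2"
    using k by (simp add: power_divide diff_divide_distrib)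
  also have "(1 + m)^2 - (1 - m)^2 = 4 * m" by (simp add: power2_eq_square algebra_simps)
  finally show ?thesis .
qed

lemma aux2: "(x::real) \<noteq> 1 \<Longrightarrow> y \<noteq> 1 \<Longrightarrow>
  (1 + x) / (1 - x) * ((1 + y) / (1 - y)) + 2 * a / (1 - x) * (2 * b / (1 - y))
  = ((1 + x) * (1 + y) + 4 * a * b) / ((1 - x) * (1 - y))"
proof -
  have e1: "(1 + x) / (1 - x) * ((1 + y) / (1 - y)) = ((1 + x) * (1 + y)) / ((1 - x) * (1 - y))"
    by (rule times_divide_times_eq)
  have e2: "2 * a / (1 - x) * (2 * b / (1 - y)) = (4 * a * b) / ((1 - x) * (1 - y))"
    by (simp add: times_divide_times_eq)
  show ?thesis unfolding e1 e2 by (rule add_divide_distrib[symmetric])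
qed

lemma aux3: "((1 + a^2) * (1 + b^2) + 4 * a * b) / ((1 - a^2) * (1 - b^2))
   = 1 + 2 * (a + b)^2 / ((1 - a^2) * (1 - (b::real)^2))" if "(1 - a^2) * (1 - b^2) \<noteq> 0"
proof -
  have "(1 + a^2) * (1 + b^2) + 4 * a * b = (1 - a^2) * (1 - b^2) + 2 * (a + b)^2"
    by (simp add: power2_eq_square algebra_simps)
  then show ?thesis using that by (simp add: add_divide_distrib)
qed

lemma cosh_hdist0: "u \<in> disc \<Longrightarrow> cosh (hdist u 0) = (1 + (cmod u)^2) / (1 - (cmod u)^2)"
proof -
  assume u: "u \<in> disc"
  have z: "0 \<in> disc" by (simp add: disc_iff)
  have m: "1 - (cmod u)^2 \<noteq> 0" using disc_sq[OF u] by simp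
  have "cosh (hdist u 0) = 1 + 2 * (cmod u)^2 / (1 - (cmod u)^2)"
    using cosh_hdist[OF u z] harg_0 harg_sym by metis
  also have "\<dots> = (1 + (cmod u)^2) / (1 - (cmod u)^2)"
    using m by (simp add: divide_simps)
  finally show ?thesis .
qed

lemma sinh_hdist0: "u \<in> disc \<Longrightarrow> sinh (hdist u 0) = 2 * cmod u / (1 - (cmod u)^2)"
proof -
  assume u: "u \<in> disc"
  have m: "1 - (cmod u)^2 > 0" using disc_sq[OF u] by simp
  have "harg u 0 \<ge> 1" using harg_ge1[OF u] by (simp add: disc_iff)
  then have "sinh (hdist u 0) = sqrt ((harg u 0)^2 - 1)"
    by (simp add: hdist_harg sinh_arcosh_real)
  also have "(harg u 0)^2 - 1 = (2 * cmod u / (1 - (cmod u)^2))^2"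
  proof -
    have "(harg u 0)^2 - 1 = 4 * (cmod u)^2 / (1 - (cmod u)^2)^2"
      unfolding harg_sym[of u 0] harg_0 using m by (intro aux1) simp
    then show ?thesis by (simp add: power_divide power_mult_distrib)
  qed
  also have "sqrt \<dots> = 2 * cmod u / (1 - (cmod u)^2)" using m by simp
  finally show ?thesis .
qed

lemma triangle0:
  assumes u: "u \<in> disc" and v: "v \<in> disc"
  shows "hdist u v \<le> hdist u 0 + hdist 0 v"
proof -
  have z: "0 \<in> disc" by (simp add: disc_iff)
  let ?a = "cmod u" and ?b = "cmod v"
  have ma: "1 - ?a^2 > 0" and mb: "1 - ?b^2 > 0" using disc_sq u v by auto
  have "cosh (hdist u 0 + hdist 0 v) = cosh (hdist u 0) * cosh (hdist v 0) + sinh (hdist u 0) * sinh (hdist v 0)"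
    by (simp add: cosh_add hdist_sym)
  also have "\<dots> = (1 + ?a^2) / (1 - ?a^2) * ((1 + ?b^2) / (1 - ?b^2)) + 2 * ?a / (1 - ?a^2) * (2 * ?b / (1 - ?b^2))"
    by (simp add: cosh_hdist0 sinh_hdist0 u v)
  also have "\<dots> = ((1 + ?a^2) * (1 + ?b^2) + 4 * ?a * ?b) / ((1 - ?a^2) * (1 - ?b^2))"
    using ma mb by (intro aux2) auto
  also have "\<dots> = 1 + 2 * (?a + ?b)^2 / ((1 - ?a^2) * (1 - ?b^2))"
    using ma mb by (intro aux3) simp
  finally have e: "cosh (hdist u 0 + hdist 0 v) = 1 + 2 * (?a + ?b)^2 / ((1 - ?a^2) * (1 - ?b^2))" .
  have "cmod (u - v) \<le> ?a + ?b" by (rule norm_triangle_ineq4)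
  then have "(cmod (u - v))^2 \<le> (?a + ?b)^2" by (simp add: power_mono)
  then have "harg u v \<le> 1 + 2 * (?a + ?b)^2 / ((1 - ?a^2) * (1 - ?b^2))"
    unfolding harg_def using ma mb by (simp add: divide_right_mono)
  then have "cosh (hdist u v) \<le> cosh (hdist u 0 + hdist 0 v)" using e cosh_hdist[OF u v] by simp
  then show ?thesis
    using cosh_real_nonneg_le_iff hdist_nonneg u v z by (smt (verit))
qed

lemma to_zero:
  assumes "c \<in> disc"
  shows "\<exists>a b. nrm a b \<and> moeb a b c = 0"
proof -
  have m: "1 - (cmod c)^2 > 0" using disc_sq[OF assms] by simp
  define r where "r = 1 / sqrt (1 - (cmod c)^2)"
  have r2: "r^2 * (1 - (cmod c)^2) = 1" using m by (simp add: r_def power_divide)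
  have "nrm (complex_of_real r) (- c * complex_of_real r)"
    unfolding nrm_def using r2 by (simp add: norm_mult power_mult_distrib algebra_simps)
  moreover have "moeb (complex_of_real r) (- c * complex_of_real r) c = 0"
    by (simp add: moeb_def)
  ultimately show ?thesis by blast
qed

lemma hdist_triangle:
  assumes y: "y \<in> disc" and z: "z \<in> disc" and c: "c \<in> disc"
  shows "hdist y z \<le> hdist y c + hdist c z"
proof -
  obtain a b where n: "nrm a b" and m: "moeb a b c = 0" using to_zero[OF c] by blast
  have "hdist (moeb a b y) (moeb a b z) \<le> hdist (moeb a b y) 0 + hdist 0 (moeb a b z)"
    by (rule triangle0) (use moeb_disc n y z in auto)
  then show ?thesis using hdist_moeb n y z c m by metis
qed

section \<open>Projection onto the real diameter\<close>

definition P :: "complex \<Rightarrow> real" where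
  "P u = 2 * Re u / ((1 + (cmod u)^2) + sqrt ((1 + (cmod u)^2)^2 - 4 * (Re u)^2))"

lemma aux4: "(D::real) \<noteq> 0 \<Longrightarrow> (r * (2 * r / D)^2 - c * (2 * r / D) + r) * D^2 = r * (4 * r^2 - 2 * c * D + D^2)"
  by (simp add: field_simps power2_eq_square)

lemma P_facts:
  assumes u: "u \<in> disc"
  shows "\<bar>P u\<bar> < 1" and "Re u * (P u)^2 - (1 + (cmod u)^2) * P u + Re u = 0"
proof -
  let ?r = "Re u" and ?c = "1 + (cmod u)^2"
  have a1: "cmod u < 1" using u by (simp add: disc_iff)
  have ar: "\<bar>?r\<bar> \<le> cmod u" by (rule abs_Re_le_cmod)
  have "(1 - cmod u)^2 > 0" using a1 by simp
  then have cu: "2 * cmod u < ?c" by (simp add: power2_eq_square algebra_simps)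
  have rc: "4 * ?r^2 \<le> ?c^2"
  proof -
    have "(2 * \<bar>?r\<bar>)^2 \<le> ?c^2"
      by (rule power_mono) (use ar cu in auto)
    then show ?thesis by (simp add: power_mult_distrib)
  qed
  define S where "S = sqrt (?c^2 - 4 * ?r^2)"
  have S0: "S \<ge> 0" and S2: "S^2 = ?c^2 - 4 * ?r^2" using rc by (auto simp: S_def)
  have cpos: "?c + S > 0" using S0 by (smt (verit) zero_le_power2)
  have Pd: "P u = 2 * ?r / (?c + S)" by (simp add: P_def S_def)
  have "\<bar>P u\<bar> = 2 * \<bar>?r\<bar> / (?c + S)" using cpos by (simp add: Pd abs_div)
  also have "\<dots> \<le> 2 * \<bar>?r\<bar> / ?c"
    using S0 cpos by (intro divide_left_mono) (auto intro!: mult_pos_pos simp: add_pos_nonneg)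
  also have "\<dots> < 1" using ar cu by (simp add: field_simps)
  finally show "\<bar>P u\<bar> < 1" .
  have "(?r * (P u)^2 - ?c * P u + ?r) * (?c + S)^2 = ?r * (4 * ?r^2 - 2 * ?c * (?c + S) + (?c + S)^2)"
    unfolding Pd using cpos by (intro aux4) simp
  also have "\<dots> = ?r * (4 * ?r^2 - ?c^2 + S^2)" by (simp add: power2_eq_square algebra_simps)
  also have "\<dots> = 0" using S2 by simp
  finally show "?r * (P u)^2 - ?c * P u + ?r = 0" using cpos by simp
qed

lemma cmod_minus_real_sq: "(cmod (u - complex_of_real p))^2 = (cmod u)^2 - 2 * p * Re u + p^2"
  by (simp only: cmod_power2) (simp add: power2_eq_square algebra_simps)

lemma P_min:
  assumes u: "u \<in> disc" and p: "\<bar>p\<bar> < 1" and ne: "p \<noteq> P u"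
  shows "harg u (complex_of_real (P u)) < harg u (complex_of_real p)"
proof -
  let ?r = "Re u" and ?m = "(cmod u)^2" and ?p0 = "P u"
  have p0: "\<bar>?p0\<bar> < 1" and E: "?r * ?p0^2 - (1 + ?m) * ?p0 + ?r = 0" using P_facts[OF u] by auto
  have mu: "1 - ?m > 0" using disc_sq[OF u] by simp
  have a1: "cmod u < 1" using u by (simp add: disc_iff)
  have ar: "\<bar>?r\<bar> \<le> cmod u" by (rule abs_Re_le_cmod)
  have "\<bar>?r\<bar> * \<bar>?p0\<bar> \<le> cmod u * 1" using ar p0 by (intro mult_mono) auto
  then have "\<bar>?r * ?p0\<bar> \<le> cmod u" by (simp add: abs_mult)
  moreover have "(1 - cmod u)^2 > 0" using a1 by simp
  then have "2 * cmod u < 1 + ?m" by (simp add: power2_eq_square algebra_simps)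
  ultimately have K: "1 + ?m - 2 * ?r * ?p0 > 0" by linarith
  have pp: "1 - p^2 > 0" and pp0: "1 - ?p0^2 > 0" using p p0 by (simp_all add: abs_square_less_1)
  have id: "(?m - 2 * p * ?r + p^2) * (1 - ?p0^2) - (?m - 2 * ?p0 * ?r + ?p0^2) * (1 - p^2)
     = (p - ?p0)^2 * (1 + ?m - 2 * ?r * ?p0) - 2 * (p - ?p0) * (?r * ?p0^2 - (1 + ?m) * ?p0 + ?r)"
    by (simp add: algebra_simps power2_eq_square)
  have "(p - ?p0)^2 > 0" using ne by simp
  then have pos: "(?m - 2 * p * ?r + p^2) * (1 - ?p0^2) - (?m - 2 * ?p0 * ?r + ?p0^2) * (1 - p^2) > 0"
    unfolding id E using K by simp
  have "(?m - 2 * ?p0 * ?r + ?p0^2) / (1 - ?p0^2) < (?m - 2 * p * ?r + p^2) / (1 - p^2)"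
    using pos pp pp0 by (simp add: divide_simps)
  then have "(2 / (1 - ?m)) * ((?m - 2 * ?p0 * ?r + ?p0^2) / (1 - ?p0^2)) < (2 / (1 - ?m)) * ((?m - 2 * p * ?r + p^2) / (1 - p^2))"
    using mu by (intro mult_strict_left_mono) auto
  moreover have "2 * X / ((1 - ?m) * (1 - q^2)) = (2 / (1 - ?m)) * (X / (1 - q^2))" for X q :: real
    by simp
  ultimately show ?thesis unfolding harg_def cmod_minus_real_sq by simp
qed



lemma K1:
  assumes u: "u \<in> disc" and v: "v \<in> disc" and p: "\<bar>p\<bar> < 1" and q: "\<bar>q\<bar> < 1"
    and up: "cmod u = \<bar>p\<bar>" and vq: "cmod v = \<bar>q\<bar>"
    and h: "harg u v = harg (complex_of_real p) (complex_of_real q)"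
  shows "(cmod (u - v))^2 = (p - q)^2"
proof -
  have d1: "1 - p^2 > 0" "1 - q^2 > 0" using p q by (auto simp: abs_square_less_1)
  have "(cmod u)^2 = p^2" "(cmod v)^2 = q^2" using up vq by simp_all
  then have "2 * (cmod (u - v))^2 / ((1 - p^2) * (1 - q^2)) = 2 * (p - q)^2 / ((1 - p^2) * (1 - q^2))"
    using h unfolding harg_def by (simp flip: of_real_diff)
  then show ?thesis using d1 by (simp add: divide_simps)
qed

lemma K2:
  assumes up: "cmod u = \<bar>p\<bar>" and e: "cmod e = 1" and q: "q \<noteq> 0"
    and h: "(cmod (u - complex_of_real q * e))^2 = (p - q)^2"
  shows "u = complex_of_real p * e"
proof -
  define w where "w = u * cnj e"
  have ee: "e * cnj e = 1" using e complex_norm_square[of e] by simp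
  have uw: "u = w * e" unfolding w_def using ee by (simp add: mult.assoc mult.commute)
  have cw: "cmod w = \<bar>p\<bar>" using up e by (simp add: w_def norm_mult)
  have "u - complex_of_real q * e = (w - complex_of_real q) * e" unfolding uw by (simp add: algebra_simps)
  then have "cmod (u - complex_of_real q * e) = cmod (w - complex_of_real q)" using e by (simp add: norm_mult)
  then have 1: "(Re w - q)^2 + (Im w)^2 = (p - q)^2" using h by (simp add: cmod_power2)
  have 2: "(Re w)^2 + (Im w)^2 = p^2" using cw by (metis cmod_power2 power2_abs)
  have "q * (Re w - p) = (((Re w)^2 + (Im w)^2 - p^2) - ((Re w - q)^2 + (Im w)^2 - (p - q)^2)) / 2"
    by (simp add: power2_eq_square algebra_simps)
  also have "\<dots> = 0" using 1 2 by simp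
  finally have "q * (Re w - p) = 0" .
  then have rw: "Re w = p" using q by simp
  then have "Im w = 0" using 2 by simp
  then have "w = complex_of_real p" using rw by (simp add: complex_eq_iff)
  then show ?thesis using uw by simp
qed

lemma unit_geodesic_disc: "unit_geodesic \<kappa> \<Longrightarrow> \<kappa> s \<in> disc"
  by (auto simp: unit_geodesic_def)

lemma harg_eq_of_hdist:
  assumes "unit_geodesic \<kappa>"
  shows "harg (\<kappa> s) (\<kappa> t) = harg (tc s) (tc t)"
proof -
  have "hdist (\<kappa> s) (\<kappa> t) = hdist (tc s) (tc t)"
    using assms hdist_tc by (simp add: unit_geodesic_def)
  then show ?thesis using hdist_eq_iff unit_geodesic_disc[OF assms] tc_disc by blast
qed

lemma class0:
  assumes g: "unit_geodesic lam" and l0: "lam 0 = 0"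
  shows "\<exists>e. cmod e = 1 \<and> (\<forall>s. lam s = e * tc s)"
proof -
  have mag: "cmod (lam s) = \<bar>tanh (s/2)\<bar>" for s
  proof -
    have "harg (lam s) (lam 0) = harg (tc s) (tc 0)" by (rule harg_eq_of_hdist[OF g])
    then have "harg 0 (lam s) = harg 0 (tc s)" using l0 by (simp add: tc_def harg_sym)
    then have h: "2 * (cmod (lam s))^2 / (1 - (cmod (lam s))^2) = 2 * (tanh (s/2))^2 / (1 - (tanh (s/2))^2)"
      unfolding harg_0 by (simp add: tc_def)
    have a: "1 - (cmod (lam s))^2 > 0" using disc_sq unit_geodesic_disc[OF g] by simp
    have b: "1 - (tanh (s/2))^2 > 0" using tanh_real_bounds[of "s/2"] by (simp add: abs_square_less_1 abs_less_iff)
    from h a b have "(cmod (lam s))^2 * (1 - (tanh (s/2))^2) = (tanh (s/2))^2 * (1 - (cmod (lam s))^2)"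
      by (simp add: divide_simps)
    then have "(cmod (lam s))^2 = (tanh (s/2))^2" by (simp add: algebra_simps)
    then show ?thesis by (metis abs_norm_cancel power2_abs power2_eq_iff_nonneg abs_ge_zero)
  qed
  define q where "q = tanh (1/2::real)"
  have q0: "q > 0" by (simp add: q_def)
  define e where "e = lam 1 / complex_of_real q"
  have l1: "lam 1 = complex_of_real q * e" using q0 by (simp add: e_def)
  have e1: "cmod e = 1" using mag[of 1] q0 by (simp add: e_def norm_divide q_def)
  have "lam s = e * tc s" for s
  proof -
    have h: "harg (lam s) (lam 1) = harg (tc s) (tc 1)" by (rule harg_eq_of_hdist[OF g])
    have "(cmod (lam s - lam 1))^2 = (tanh (s/2) - q)^2"
      using K1[OF unit_geodesic_disc[OF g] unit_geodesic_disc[OF g], of "tanh (s/2)" q] h mag[of s] mag[of 1]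
        tanh_real_bounds[of "s/2"] tanh_real_bounds[of "1/2"] 
      by (simp add: tc_def q_def abs_less_iff)
    then have "lam s = complex_of_real (tanh (s/2)) * e"
      using K2[of "lam s" "tanh (s/2)" e q] mag[of s] e1 q0 l1 by simp
    then show ?thesis by (simp add: tc_def mult.commute)
  qed
  then show ?thesis using e1 by blast
qed

lemma rot_moeb:
  assumes "cmod e = 1"
  shows "nrm (csqrt e) 0" and "moeb (csqrt e) 0 z = e * z"
proof -
  have c: "cmod (csqrt e) = 1" using assms by (simp add: norm_csqrt)
  then show "nrm (csqrt e) 0" by (simp add: nrm_def)
  have cc: "csqrt e * cnj (csqrt e) = 1" using c complex_norm_square[of "csqrt e"] by simp
  have nz: "csqrt e \<noteq> 0" using c by auto
  then have "cnj (csqrt e) = 1 / csqrt e" using cc by (simp add: field_simps mult.commute)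
  then have "csqrt e / cnj (csqrt e) = (csqrt e)^2" by (simp add: power2_eq_square)
  then have "csqrt e / cnj (csqrt e) = e" by simp
  moreover have "moeb (csqrt e) 0 z = (csqrt e / cnj (csqrt e)) * z" by (simp add: moeb_def)
  ultimately show "moeb (csqrt e) 0 z = e * z" by simp
qed

lemma classify:
  assumes g: "unit_geodesic \<kappa>"
  shows "\<exists>a b. nrm a b \<and> (\<forall>x. \<kappa> x = moeb a b (tc (x - t)))"
proof -
  have w: "\<kappa> t \<in> disc" using unit_geodesic_disc[OF g] .
  obtain a0 b0 where n0: "nrm a0 b0" and m0: "moeb a0 b0 (\<kappa> t) = 0" using to_zero[OF w] by blast
  define lam where "lam s = moeb a0 b0 (\<kappa> (s + t))" for s
  have lg: "unit_geodesic lam"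
    unfolding unit_geodesic_def
  proof (intro conjI allI)
    show "range lam \<subseteq> disc" using moeb_disc[OF n0] unit_geodesic_disc[OF g] by (auto simp: lam_def)
    fix s1 s2 show "hdist (lam s1) (lam s2) = \<bar>s1 - s2\<bar>"
      using hdist_moeb[OF n0 unit_geodesic_disc[OF g] unit_geodesic_disc[OF g]] g
      by (simp add: lam_def unit_geodesic_def)
  qed
  obtain e where e1: "cmod e = 1" and le: "\<forall>s. lam s = e * tc s"
    using class0[OF lg] m0 by (auto simp: lam_def)
  have nr: "nrm (csqrt e) 0" and rot: "\<And>z. moeb (csqrt e) 0 z = e * z" using rot_moeb[OF e1] by auto
  define a where "a = cnj a0 * csqrt e + (- b0) * cnj 0"
  define b where "b = cnj a0 * 0 + (- b0) * cnj (csqrt e)"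
  have nab: "nrm a b" unfolding a_def b_def by (rule nrm_comp[OF nrm_inv[OF n0] nr])
  have "\<kappa> x = moeb a b (tc (x - t))" for x
  proof -
    have "\<kappa> x = moeb (cnj a0) (- b0) (lam (x - t))"
      unfolding lam_def using moeb_inv1[OF n0 unit_geodesic_disc[OF g]] by simp
    also have "\<dots> = moeb (cnj a0) (- b0) (moeb (csqrt e) 0 (tc (x - t)))" using le rot by simp
    also have "\<dots> = moeb a b (tc (x - t))" unfolding a_def b_def by (rule moeb_comp[OF nr tc_disc])
    finally show ?thesis .
  qed
  then show ?thesis using nab by blast
qed



lemma proj_transfer:
  assumes u: "u \<in> disc"
    and h: "\<And>x. hdist y (\<kappa> x) = hdist u (tc (x - t))"
  shows "proj_par \<kappa> y = t + 2 * artanh (P u)"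
    and "dist_geo \<kappa> y = hdist u (complex_of_real (P u))"
proof -
  have pu: "\<bar>P u\<bar> < 1" using P_facts(1)[OF u] .
  define x0 where "x0 = t + 2 * artanh (P u)"
  have tx0: "tc (x0 - t) = complex_of_real (P u)"
    using tanh_artanh_real[OF pu] by (simp add: tc_def x0_def)
  have lt: "hdist y (\<kappa> x0) < hdist y (\<kappa> x)" if "x \<noteq> x0" for x
  proof -
    have ne: "tanh ((x - t) / 2) \<noteq> P u"
    proof
      assume "tanh ((x - t) / 2) = P u"
      then have "artanh (tanh ((x - t) / 2)) = artanh (P u)" by simp
      then have "(x - t) / 2 = artanh (P u)" by (simp add: artanh_tanh_real)
      then show False using that by (simp add: x0_def field_simps)
    qed
    have "harg u (complex_of_real (P u)) < harg u (tc (x - t))"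
      using P_min[OF u _ ne] tanh_real_bounds[of "(x - t)/2"] by (simp add: tc_def abs_less_iff)
    then have "hdist u (complex_of_real (P u)) < hdist u (tc (x - t))"
      using hdist_less_iff u tc_disc of_real_disc[OF pu] by blast
    then show ?thesis using h tx0 by simp
  qed
  have le: "hdist y (\<kappa> x0) \<le> hdist y (\<kappa> x)" for x
    using lt[of x] by (cases "x = x0") auto
  show "proj_par \<kappa> y = t + 2 * artanh (P u)"
    unfolding proj_par_def x0_def[symmetric]
  proof (rule the_equality)
    show "\<forall>s. hdist y (\<kappa> x0) \<le> hdist y (\<kappa> s)" using le by blast
    fix x1 assume "\<forall>s. hdist y (\<kappa> x1) \<le> hdist y (\<kappa> s)"
    then have "hdist y (\<kappa> x1) \<le> hdist y (\<kappa> x0)" by blast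
    then show "x1 = x0" using lt[of x1] by (cases "x1 = x0") auto
  qed
  have "dist_geo \<kappa> y = hdist y (\<kappa> x0)"
    unfolding dist_geo_def
  proof (rule antisym)
    show "(INF t. hdist y (\<kappa> t)) \<le> hdist y (\<kappa> x0)"
      by (rule cINF_lower) (use le in \<open>auto intro!: bdd_belowI2[where m="hdist y (\<kappa> x0)"]\<close>)
    show "hdist y (\<kappa> x0) \<le> (INF t. hdist y (\<kappa> t))"
      by (rule cINF_greatest) (use le in auto)
  qed
  then show "dist_geo \<kappa> y = hdist u (complex_of_real (P u))" using h tx0 by simp
qed

lemma geo_transfer:
  assumes n: "nrm a b" and k: "\<And>x. \<kappa> x = moeb a b (tc (x - t))" and y: "y \<in> disc"
  shows "hdist y (\<kappa> x) = hdist (moeb (cnj a) (- b) y) (tc (x - t))"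
proof -
  have kd: "\<kappa> x \<in> disc" using k moeb_disc[OF n tc_disc] by simp
  have "hdist y (\<kappa> x) = hdist (moeb (cnj a) (- b) y) (moeb (cnj a) (- b) (\<kappa> x))"
    using hdist_moeb[OF nrm_inv[OF n] y kd] by simp
  also have "moeb (cnj a) (- b) (\<kappa> x) = tc (x - t)" using k moeb_inv1[OF n tc_disc] by simp
  finally show ?thesis .
qed

lemma proj_dist:
  assumes g: "unit_geodesic \<kappa>" and y: "y \<in> disc"
  shows "hdist y (\<kappa> (proj_par \<kappa> y)) = dist_geo \<kappa> y"
proof -
  obtain a b where n: "nrm a b" and k: "\<And>x. \<kappa> x = moeb a b (tc (x - 0))"
    using classify[OF g, of 0] by blast
  let ?u = "moeb (cnj a) (- b) y"
  have u: "?u \<in> disc" using moeb_disc[OF nrm_inv[OF n] y] .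
  have h: "\<And>x. hdist y (\<kappa> x) = hdist ?u (tc (x - 0))" using geo_transfer[OF n k y] .
  have pu: "\<bar>P ?u\<bar> < 1" using P_facts(1)[OF u] .
  have "hdist y (\<kappa> (proj_par \<kappa> y)) = hdist ?u (tc (2 * artanh (P ?u)))"
    using h proj_transfer(1)[OF u h] by simp
  also have "tc (2 * artanh (P ?u)) = complex_of_real (P ?u)"
    using tanh_artanh_real[OF pu] by (simp add: tc_def)
  finally show ?thesis using proj_transfer(2)[OF u h] by simp
qed



lemma fu_aut: "fuchsian G \<Longrightarrow> g \<in> G \<Longrightarrow> \<exists>a b. nrm a b \<and> g = moeb a b"
  unfolding fuchsian_def using disc_aut_nrm by blast

lemma fu_disc: "fuchsian G \<Longrightarrow> g \<in> G \<Longrightarrow> z \<in> disc \<Longrightarrow> g z \<in> disc"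
  using fu_aut moeb_disc by blast

lemma fu_hdist: "fuchsian G \<Longrightarrow> g \<in> G \<Longrightarrow> y \<in> disc \<Longrightarrow> z \<in> disc \<Longrightarrow> hdist (g y) (g z) = hdist y z"
  using fu_aut hdist_moeb by blast

lemma orbit_disc: "fuchsian G \<Longrightarrow> x \<in> disc \<Longrightarrow> y \<in> orbit G x \<Longrightarrow> y \<in> disc"
  unfolding orbit_def using fu_disc by blast

lemma inj_le:
  assumes fu: "fuchsian G" and x: "x \<in> disc" and y: "y \<in> orbit G x" and z: "z \<in> orbit G x" and ne: "y \<noteq> z"
  shows "2 * inj_rad G x \<le> hdist y z"
proof -
  let ?S = "{hdist y z | y z. y \<in> orbit G x \<and> z \<in> orbit G x \<and> y \<noteq> z}"
  have "bdd_below ?S"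
    by (rule bdd_belowI[where m=0]) (use orbit_disc[OF fu x] hdist_nonneg in auto)
  moreover have "hdist y z \<in> ?S" using y z ne by blast
  ultimately have "Inf ?S \<le> hdist y z" by (intro cInf_lower)
  then show ?thesis by (simp add: inj_rad_def)
qed

lemma part1:
  assumes fu: "fuchsian G" and x: "x \<in> disc" and g: "unit_geodesic \<kappa>"
  shows "separated (2 * (inj_rad G x - \<rho>)) (Splus G \<kappa> \<rho> x)"
  unfolding separated_def
proof (intro ballI impI)
  fix s s' assume s: "s \<in> Splus G \<kappa> \<rho> x" and s': "s' \<in> Splus G \<kappa> \<rho> x" and ne: "s \<noteq> s'"
  obtain y where y: "y \<in> orbit G x" "y \<in> nbhd_plus \<kappa> \<rho>" and sy: "s = proj_par \<kappa> y"
    using s unfolding Splus_def by blast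
  obtain z where z: "z \<in> orbit G x" "z \<in> nbhd_plus \<kappa> \<rho>" and sz: "s' = proj_par \<kappa> z"
    using s' unfolding Splus_def by blast
  have yz: "y \<noteq> z" using ne sy sz by auto
  have yd: "y \<in> disc" and zd: "z \<in> disc" using orbit_disc[OF fu x] y z by auto
  have dy: "dist_geo \<kappa> y \<le> \<rho>" and dz: "dist_geo \<kappa> z \<le> \<rho>" using y(2) z(2) by (auto simp: nbhd_plus_def)
  have ks: "\<kappa> s \<in> disc" and ks': "\<kappa> s' \<in> disc" using unit_geodesic_disc[OF g] by auto
  have "hdist y z \<le> hdist y (\<kappa> s) + hdist (\<kappa> s) z" by (rule hdist_triangle[OF yd zd ks])
  also have "hdist (\<kappa> s) z \<le> hdist (\<kappa> s) (\<kappa> s') + hdist (\<kappa> s') z" by (rule hdist_triangle[OF ks zd ks'])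
  also have "hdist (\<kappa> s) (\<kappa> s') = \<bar>s - s'\<bar>" using g by (simp add: unit_geodesic_def)
  also have "hdist y (\<kappa> s) = dist_geo \<kappa> y" using proj_dist[OF g yd] sy by simp
  also have "hdist (\<kappa> s') z = dist_geo \<kappa> z" using proj_dist[OF g zd] sz by (simp add: hdist_sym)
  finally have "hdist y z \<le> dist_geo \<kappa> y + (\<bar>s - s'\<bar> + dist_geo \<kappa> z)" by simp
  moreover have "2 * inj_rad G x \<le> hdist y z" by (rule inj_le[OF fu x y(1) z(1) yz])
  ultimately show "2 * (inj_rad G x - \<rho>) \<le> \<bar>s - s'\<bar>" using dy dz by simp
qed



lemma moeb_deriv:
  assumes n: "nrm a b" and z: "z \<in> disc"
  shows "(moeb a b has_field_derivative 1 / (cnj b * z + cnj a)^2) (at z)"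
proof -
  have d: "a * cnj a - b * cnj b = 1" using nrm_cx[OF n] .
  have nz: "cnj b * z + cnj a \<noteq> 0" using moeb_den_nz[OF n z] .
  have "((\<lambda>z. (a * z + b) / (cnj b * z + cnj a)) has_field_derivative
        (a * (cnj b * z + cnj a) - (a * z + b) * cnj b) / (cnj b * z + cnj a)^2) (at z)"
    using nz by (auto intro!: derivative_eq_intros simp: power2_eq_square)
  moreover have "a * (cnj b * z + cnj a) - (a * z + b) * cnj b = 1"
    using d by (simp add: algebra_simps)
  ultimately show ?thesis unfolding moeb_def[abs_def] by simp
qed

lemma tc_shift_deriv: "((\<lambda>x. tc (x - t)) has_vector_derivative complex_of_real (1/2)) (at t)"
proof -
  have "((\<lambda>x. tanh ((x - t) / 2)) has_field_derivative (1 - tanh ((t - t)/2) ^ 2) * (1/2)) (at t)"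
    by (auto intro!: derivative_eq_intros)
  then have "((\<lambda>x. tanh ((x - t) / 2)) has_field_derivative 1/2) (at t)" by simp
  then show ?thesis unfolding tc_def by (rule has_vector_derivative_of_real)
qed

lemma geo_deriv:
  assumes n: "nrm a b"
  shows "((\<lambda>x. moeb a b (tc (x - t))) has_vector_derivative 1 / (2 * (cnj a)^2)) (at t)"
proof -
  have "(moeb a b has_field_derivative 1 / (cnj b * 0 + cnj a)^2) (at (tc (t - t)))"
    using moeb_deriv[OF n, of 0] by (simp add: tc_def disc_iff)
  from field_vector_diff_chain_at[OF tc_shift_deriv this]
  show ?thesis by (simp add: o_def)
qed

definition Tf :: "complex \<Rightarrow> complex \<Rightarrow> complex \<Rightarrow> complex" where
  "Tf w v y = (complex_of_real (cmod v) / v) * ((y - w) / (1 - cnj w * y))"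

lemma Tf_eq:
  assumes n: "nrm a b" and y: "y \<in> disc"
  shows "Tf (b / cnj a) (1 / (2 * (cnj a)^2)) y = moeb (cnj a) (- b) y"
proof -
  have a0: "a \<noteq> 0" using nrm_less[OF n] by auto
  have ca: "complex_of_real ((cmod a)^2) = a * cnj a" by (rule complex_norm_square)
  have "complex_of_real (cmod (1 / (2 * (cnj a)^2))) = 1 / (2 * (a * cnj a))"
    using ca by (simp add: norm_divide norm_mult norm_power)
  then have 1: "complex_of_real (cmod (1 / (2 * (cnj a)^2))) / (1 / (2 * (cnj a)^2)) = cnj a / a"
    using a0 by (simp add: field_simps power2_eq_square)
  have den: "cnj (- b) * y + cnj (cnj a) \<noteq> 0" using moeb_den_nz[OF nrm_inv[OF n] y] .
  then have den': "a - cnj b * y \<noteq> 0" by (simp add: algebra_simps)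
  have 2: "(y - b / cnj a) / (1 - cnj (b / cnj a) * y) = (a / cnj a) * ((cnj a * y - b) / (a - cnj b * y))"
    using a0 den' by (simp add: field_simps)
  show ?thesis unfolding Tf_def 1 2 moeb_def using a0 den' by (simp add: field_simps)
qed

lemma comp_geodesic:
  assumes fu: "fuchsian G" and g: "g \<in> G" and k: "unit_geodesic \<kappa>"
  shows "unit_geodesic (\<lambda>x. g (\<kappa> x))"
  unfolding unit_geodesic_def
  using fu_disc[OF fu g] fu_hdist[OF fu g] unit_geodesic_disc[OF k] k
  by (auto simp: unit_geodesic_def)

lemma tangent_transfer:
  assumes fu: "fuchsian G" and g: "g \<in> G" and k: "unit_geodesic \<kappa>"
    and w_def: "w = g (\<kappa> t)" and v_def: "v = deriv g (\<kappa> t) * vector_derivative \<kappa> (at t)"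
  shows "w \<in> disc" and "v \<noteq> 0"
    and "\<And>y x. y \<in> disc \<Longrightarrow> hdist y (g (\<kappa> x)) = hdist (Tf w v y) (tc (x - t))"
    and "\<And>y. y \<in> disc \<Longrightarrow> Tf w v y \<in> disc"
proof -
  obtain a b where n: "nrm a b" and kk: "\<And>x. \<kappa> x = moeb a b (tc (x - t))"
    using classify[OF k, of t] by blast
  have kd: "(\<kappa> has_vector_derivative 1 / (2 * (cnj a)^2)) (at t)"
    using geo_deriv[OF n, of t] kk by (metis (no_types, lifting) ext)
  obtain a1 b1 where n1: "nrm a1 b1" and g1: "g = moeb a1 b1" using fu_aut[OF fu g] by blast
  have ktd: "\<kappa> t \<in> disc" using unit_geodesic_disc[OF k] .
  have gd: "(g has_field_derivative deriv g (\<kappa> t)) (at (\<kappa> t))"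
    using moeb_deriv[OF n1 ktd] g1 DERIV_imp_deriv by (metis)
  have c1: "((g \<circ> \<kappa>) has_vector_derivative vector_derivative \<kappa> (at t) * deriv g (\<kappa> t)) (at t)"
    using field_vector_diff_chain_at[OF kd gd] vector_derivative_at[OF kd] by simp
  have gk: "unit_geodesic (\<lambda>x. g (\<kappa> x))" by (rule comp_geodesic[OF fu g k])
  obtain a2 b2 where n2: "nrm a2 b2" and kk2: "\<And>x. g (\<kappa> x) = moeb a2 b2 (tc (x - t))"
    using classify[OF gk, of t] by blast
  have c2: "((g \<circ> \<kappa>) has_vector_derivative 1 / (2 * (cnj a2)^2)) (at t)"
    using geo_deriv[OF n2, of t] kk2 by (simp add: o_def)
  have vv: "v = 1 / (2 * (cnj a2)^2)"
    using vector_derivative_unique_at[OF c1 c2] unfolding v_def by (simp add: mult.commute)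
  have ww: "w = b2 / cnj a2" unfolding w_def kk2 by (simp add: tc_def moeb_def)
  have a20: "a2 \<noteq> 0" using nrm_less[OF n2] by auto
  show "w \<in> disc" unfolding w_def using fu_disc[OF fu g ktd] .
  show "v \<noteq> 0" unfolding vv using a20 by simp
  show "hdist y (g (\<kappa> x)) = hdist (Tf w v y) (tc (x - t))" if y: "y \<in> disc" for y x
    using geo_transfer[OF n2 kk2 y] Tf_eq[OF n2 y] vv ww by simp
  show "Tf w v y \<in> disc" if y: "y \<in> disc" for y
    using Tf_eq[OF n2 y] vv ww moeb_disc[OF nrm_inv[OF n2] y] by simp
qed



lemma fu_inv:
  assumes fu: "fuchsian G" and g: "g \<in> G"
  shows "\<exists>k\<in>G. \<forall>z\<in>disc. k (g z) = z \<and> g (k z) = z"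
proof -
  obtain k where k: "k \<in> G" and kg: "\<forall>z\<in>disc. k (g z) = z" using fu g unfolding fuchsian_def by blast
  obtain a b where n: "nrm a b" and ga: "g = moeb a b" using fu_aut[OF fu g] by blast
  have "g (k z) = z" if z: "z \<in> disc" for z
  proof -
    let ?z' = "moeb (cnj a) (- b) z"
    have z': "?z' \<in> disc" using moeb_disc[OF nrm_inv[OF n] z] .
    have gz: "g ?z' = z" using moeb_inv2[OF n z] ga by simp
    then have "k z = ?z'" using kg z' by metis
    then show ?thesis using gz by simp
  qed
  then show ?thesis using k kg by blast
qed

lemma fu_comp: "fuchsian G \<Longrightarrow> g \<in> G \<Longrightarrow> h \<in> G \<Longrightarrow> \<exists>k\<in>G. \<forall>z\<in>disc. k z = g (h z)"
  unfolding fuchsian_def by blast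

lemma fu_id: "fuchsian G \<Longrightarrow> (\<lambda>z. z) \<in> G"
  unfolding fuchsian_def by blast

lemma fu_cont: "fuchsian G \<Longrightarrow> g \<in> G \<Longrightarrow> continuous_on disc g"
proof -
  assume fu: "fuchsian G" and g: "g \<in> G"
  obtain a b where n: "nrm a b" and ga: "g = moeb a b" using fu_aut[OF fu g] by blast
  show ?thesis unfolding ga
    by (intro continuous_at_imp_continuous_on ballI DERIV_isCont) (rule moeb_deriv[OF n])
qed

lemma disc_not_compact: "\<not> compact disc"
proof
  assume "compact disc"
  then have "closed disc" by (rule compact_imp_closed)
  moreover have "open disc" by (simp add: disc_def)
  ultimately have "disc = {} \<or> disc = UNIV" using clopen by blast
  moreover have "0 \<in> disc" "1 \<notin> disc" by (auto simp: disc_iff)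
  ultimately show False by auto
qed

lemma nontrivial_orbit:
  assumes fu: "fuchsian G" and cc: "cocompact G" and x: "x \<in> disc"
  shows "\<exists>c\<in>G. c x \<noteq> x"
proof (rule ccontr)
  assume "\<not> ?thesis"
  then have fx: "\<forall>c\<in>G. c x = x" by blast
  have "G = {g\<in>G. hdist (g x) x \<le> 0}" using fx by (auto simp: hdist_self)
  moreover have "finite {g\<in>G. hdist (g x) x \<le> 0}" using fu x unfolding fuchsian_def by blast
  ultimately have fin: "finite G" by simp
  obtain K where K: "compact K" "K \<subseteq> disc" "disc \<subseteq> (\<Union>g\<in>G. g ` K)" using cc unfolding cocompact_def by blast
  have "compact (\<Union>g\<in>G. g ` K)"
  proof (rule compact_UN[OF fin])
    fix g assume "g \<in> G"
    then show "compact (g ` K)"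
      using compact_continuous_image[OF continuous_on_subset[OF fu_cont[OF fu] K(2)] K(1)] by blast
  qed
  moreover have "(\<Union>g\<in>G. g ` K) = disc" using K fu_disc[OF fu] by blast
  ultimately show False using disc_not_compact by simp
qed

lemma dist_set_eq:
  assumes fu: "fuchsian G" and x: "x \<in> disc"
  shows "{hdist y z | y z. y \<in> orbit G x \<and> z \<in> orbit G x \<and> y \<noteq> z} = {hdist (c x) x | c. c \<in> G \<and> c x \<noteq> x}"
proof (intro equalityI subsetI)
  fix d assume "d \<in> {hdist y z | y z. y \<in> orbit G x \<and> z \<in> orbit G x \<and> y \<noteq> z}"
  then obtain h1 h2 where h: "h1 \<in> G" "h2 \<in> G" "h1 x \<noteq> h2 x" and d: "d = hdist (h1 x) (h2 x)"
    unfolding orbit_def by blast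
  obtain k where k: "k \<in> G" "\<forall>z\<in>disc. k (h2 z) = z \<and> h2 (k z) = z" using fu_inv[OF fu h(2)] by blast
  obtain c where c: "c \<in> G" "\<forall>z\<in>disc. c z = k (h1 z)" using fu_comp[OF fu k(1) h(1)] by blast
  have h1x: "h1 x \<in> disc" and h2x: "h2 x \<in> disc" using fu_disc[OF fu] h x by auto
  have cx: "c x = k (h1 x)" using c x by simp
  have kx: "k (h2 x) = x" using k x by simp
  have "d = hdist (k (h1 x)) (k (h2 x))" using d fu_hdist[OF fu k(1) h1x h2x] by simp
  then have d': "d = hdist (c x) x" using cx kx by simp
  have "c x \<noteq> x"
  proof
    assume "c x = x"
    then have "k (h1 x) = x" using cx by simp
    then have "h2 (k (h1 x)) = h2 x" by simp
    then show False using k h1x h(3) by simp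
  qed
  then show "d \<in> {hdist (c x) x | c. c \<in> G \<and> c x \<noteq> x}" using c(1) d' by blast
next
  fix d assume "d \<in> {hdist (c x) x | c. c \<in> G \<and> c x \<noteq> x}"
  then obtain c where c: "c \<in> G" "c x \<noteq> x" and d: "d = hdist (c x) x" by blast
  have "c x \<in> orbit G x" "x \<in> orbit G x" using c fu_id[OF fu] unfolding orbit_def by force+
  then show "d \<in> {hdist y z | y z. y \<in> orbit G x \<and> z \<in> orbit G x \<and> y \<noteq> z}" using c d by blast
qed

lemma inj_attained:
  assumes fu: "fuchsian G" and cc: "cocompact G" and x: "x \<in> disc"
  shows "\<exists>c\<in>G. c x \<noteq> x \<and> hdist (c x) x = 2 * inj_rad G x"
proof -
  let ?S = "{hdist (c x) x | c. c \<in> G \<and> c x \<noteq> x}"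
  obtain c0 where c0: "c0 \<in> G" "c0 x \<noteq> x" using nontrivial_orbit[OF fu cc x] by blast
  define R where "R = hdist (c0 x) x"
  have finF: "finite {g\<in>G. hdist (g x) x \<le> R}" using fu x unfolding fuchsian_def by blast
  define S' where "S' = (\<lambda>c. hdist (c x) x) ` {c\<in>G. hdist (c x) x \<le> R \<and> c x \<noteq> x}"
  have finS: "finite S'" unfolding S'_def by (rule finite_imageI) (rule finite_subset[OF _ finF], blast)
  have neS: "S' \<noteq> {}" unfolding S'_def using c0 R_def by blast
  define m where "m = Min S'"
  have mS: "m \<in> S'" unfolding m_def using Min_in[OF finS neS] .
  then obtain c where c: "c \<in> G" "c x \<noteq> x" "hdist (c x) x = m" unfolding S'_def by blast
  have mR: "m \<le> R" using Min_le[OF finS] c0 unfolding m_def S'_def R_def by blast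
  have "Inf ?S = m"
  proof (rule cInf_eq_minimum)
    show "m \<in> ?S" using c by blast
    fix s assume "s \<in> ?S"
    then obtain c' where c': "c' \<in> G" "c' x \<noteq> x" "s = hdist (c' x) x" by blast
    show "m \<le> s"
    proof (cases "s \<le> R")
      case True
      then have "s \<in> S'" unfolding S'_def using c' by blast
      then show ?thesis unfolding m_def using Min_le[OF finS] by blast
    next
      case False then show ?thesis using mR by simp
    qed
  qed
  then have "2 * inj_rad G x = m" unfolding inj_rad_def dist_set_eq[OF fu x] by simp
  then show ?thesis using c by auto
qed

lemma mag_eq:
  assumes u: "u \<in> disc" and v: "v \<in> disc" and h: "hdist 0 u = hdist 0 v"
  shows "cmod u = cmod v"
proof -
  have z: "0 \<in> disc" by (simp add: disc_iff)
  have "harg 0 u = harg 0 v" using h hdist_eq_iff[OF z u z v] by simp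
  then have h2: "2 * (cmod u)^2 / (1 - (cmod u)^2) = 2 * (cmod v)^2 / (1 - (cmod v)^2)"
    unfolding harg_0 by simp
  have a: "1 - (cmod u)^2 > 0" "1 - (cmod v)^2 > 0" using disc_sq u v by auto
  from h2 a have "(cmod u)^2 * (1 - (cmod v)^2) = (cmod v)^2 * (1 - (cmod u)^2)"
    by (simp add: divide_simps)
  then have "(cmod u)^2 = (cmod v)^2" by (simp add: algebra_simps)
  then show ?thesis by (simp add: power2_eq_iff_nonneg)
qed

lemma transport:
  assumes y1: "y1 \<in> disc" and y2: "y2 \<in> disc" and q1: "q1 \<in> disc" and q2: "q2 \<in> disc"
    and ne: "y1 \<noteq> y2" and h: "hdist y1 y2 = hdist q1 q2"
  shows "\<exists>\<alpha> \<beta>. nrm \<alpha> \<beta> \<and> moeb \<alpha> \<beta> y1 = q1 \<and> moeb \<alpha> \<beta> y2 = q2"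
proof -
  obtain a1 b1 where n1: "nrm a1 b1" and A1: "moeb a1 b1 y1 = 0" using to_zero[OF y1] by blast
  obtain a2 b2 where n2: "nrm a2 b2" and A2: "moeb a2 b2 q1 = 0" using to_zero[OF q1] by blast
  define \<zeta> where "\<zeta> = moeb a1 b1 y2"
  define \<xi> where "\<xi> = moeb a2 b2 q2"
  have zd: "\<zeta> \<in> disc" and xd: "\<xi> \<in> disc" using moeb_disc n1 n2 y2 q2 by (auto simp: \<zeta>_def \<xi>_def)
  have "hdist 0 \<zeta> = hdist 0 \<xi>"
    using hdist_moeb[OF n1 y1 y2] hdist_moeb[OF n2 q1 q2] h A1 A2 by (simp add: \<zeta>_def \<xi>_def)
  then have mz: "cmod \<zeta> = cmod \<xi>" by (rule mag_eq[OF zd xd])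
  have z0: "\<zeta> \<noteq> 0"
  proof
    assume "\<zeta> = 0"
    then have "moeb (cnj a1) (- b1) (moeb a1 b1 y2) = moeb (cnj a1) (- b1) (moeb a1 b1 y1)"
      using A1 by (simp add: \<zeta>_def)
    then show False using moeb_inv1[OF n1 y1] moeb_inv1[OF n1 y2] ne by simp
  qed
  define e where "e = \<xi> / \<zeta>"
  have x0: "\<xi> \<noteq> 0" using mz z0 by (metis norm_eq_zero)
  have e1: "cmod e = 1" using mz z0 x0 by (simp add: e_def norm_divide)
  have nr: "nrm (csqrt e) 0" and rot: "\<And>z. moeb (csqrt e) 0 z = e * z" using rot_moeb[OF e1] by auto
  define c1 where "c1 = csqrt e * a1 + 0 * cnj b1"
  define d1 where "d1 = csqrt e * b1 + 0 * cnj a1"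
  have nc: "nrm c1 d1" unfolding c1_def d1_def by (rule nrm_comp[OF nr n1])
  have C1: "moeb c1 d1 z = e * moeb a1 b1 z" if "z \<in> disc" for z
    using moeb_comp[OF n1 that, of "csqrt e" 0] rot unfolding c1_def d1_def by simp
  define \<alpha> where "\<alpha> = cnj a2 * c1 + (- b2) * cnj d1"
  define \<beta> where "\<beta> = cnj a2 * d1 + (- b2) * cnj c1"
  have na: "nrm \<alpha> \<beta>" unfolding \<alpha>_def \<beta>_def by (rule nrm_comp[OF nrm_inv[OF n2] nc])
  have T: "moeb \<alpha> \<beta> z = moeb (cnj a2) (- b2) (e * moeb a1 b1 z)" if "z \<in> disc" for z
    using moeb_comp[OF nc that, of "cnj a2" "- b2"] C1[OF that] unfolding \<alpha>_def \<beta>_def by simp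
  have "moeb \<alpha> \<beta> y1 = q1" using T[OF y1] A1 moeb_inv1[OF n2 q1] A2 by simp
  moreover have "moeb \<alpha> \<beta> y2 = q2"
    using T[OF y2] moeb_inv1[OF n2 q2] z0 by (simp add: \<zeta>_def[symmetric] \<xi>_def[symmetric] e_def)
  ultimately show ?thesis using na by blast
qed



lemma harg_neg: "harg (- u) (- v) = harg u v"
proof -
  have "- u - - v = - (u - v)" by simp
  then show ?thesis unfolding harg_def by (simp only: norm_minus_cancel)
qed

lemma P_neg: "P (- u) = - P u"
  by (simp add: P_def)

lemma config:
  assumes D: "D > 0" and rho: "D / 2 \<le> \<rho>" and dl: "\<delta> > 0"
  shows "\<exists>q. q \<in> disc \<and> - q \<in> disc \<and> hdist q (- q) = D
     \<and> harg q (complex_of_real (P q)) < cosh \<rho> \<and> harg (- q) (complex_of_real (P (- q))) < cosh \<rho>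
     \<and> 2 * artanh (P q) - 2 * artanh (P (- q)) \<noteq> 0 \<and> \<bar>2 * artanh (P q) - 2 * artanh (P (- q))\<bar> < \<delta>"
proof -
  define r where "r = tanh (D / 4)"
  have r0: "r > 0" using D by (simp add: r_def)
  have r1: "r < 1" using tanh_real_lt_1 by (simp add: r_def)
  define td where "td = tanh (\<delta> / 4)"
  have td0: "td > 0" using dl by (simp add: td_def)
  define c where "c = min (r / 2) (td / 4)"
  have c0: "c > 0" and cr: "c < r" and ctd: "c \<le> td / 4" using r0 td0 by (auto simp: c_def)
  define q where "q = Complex c (sqrt (r^2 - c^2))"
  have rc: "r^2 - c^2 \<ge> 0" using c0 cr by (simp add: power_mono)
  have cq: "cmod q = r"
  proof -
    have "(cmod q)^2 = r^2" unfolding q_def cmod_power2 using rc by simp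
    then show ?thesis using r0 by (simp add: power2_eq_iff_nonneg)
  qed
  have qd: "q \<in> disc" and nqd: "- q \<in> disc" using cq r1 by (auto simp: disc_iff)
  have z: "0 \<in> disc" by (simp add: disc_iff)
  have tD2: "tc (D / 2) = complex_of_real r" by (simp add: tc_def r_def)
  have tmD2: "tc (- D / 2) = - complex_of_real r" by (simp add: tc_def r_def)
  have t0: "tc 0 = 0" by (simp add: tc_def)
  have "harg q (- q) = harg (tc (D / 2)) (tc (- D / 2))"
  proof -
    have "cmod (q - - q) = 2 * r" using cq by (simp add: norm_mult)
    moreover have "cmod (complex_of_real r - - complex_of_real r) = 2 * r" using r0 by simp
    ultimately show ?thesis unfolding tD2 tmD2 harg_def using cq r0 by simp
  qed
  then have hq: "hdist q (- q) = D"
    using hdist_tc[of "D/2" "-D/2"] D by (simp add: hdist_harg)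
  have "harg q 0 = harg (tc (D / 2)) (tc 0)"
    unfolding tD2 t0 harg_sym[of q] harg_0 harg_sym[of "complex_of_real r"] using cq r0 by simp
  then have hq0: "hdist q 0 = D / 2"
    using hdist_tc[of "D/2" 0] D by (simp add: hdist_harg)
  define S where "S = sqrt ((1 + (cmod q)^2)^2 - 4 * (Re q)^2)"
  have "(1 - r)^2 \<ge> 0" by simp
  then have "2 * c \<le> 1 + r^2" using cr by (simp add: power2_eq_square algebra_simps)
  then have "(2 * c)^2 \<le> (1 + r^2)^2" using c0 by (intro power_mono) auto
  then have "4 * (Re q)^2 \<le> (1 + (cmod q)^2)^2" using cq by (simp add: q_def power_mult_distrib)
  then have S0: "S \<ge> 0" by (simp add: S_def)
  have Pq: "P q = 2 * c / (1 + (cmod q)^2 + S)" by (simp add: P_def S_def q_def)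
  have den: "1 + (cmod q)^2 + S \<ge> 1" using S0 by simp
  have Ppos: "P q > 0" unfolding Pq using c0 den by simp
  have Ple: "P q \<le> 2 * c" unfolding Pq using c0 den by (simp add: divide_le_eq mult_le_cancel_left1 )
  have pq1: "\<bar>P q\<bar> < 1" using P_facts(1)[OF qd] .
  have "harg q (complex_of_real (P q)) < harg q (complex_of_real 0)"
    using P_min[OF qd, of 0] Ppos by simp
  also have "harg q (complex_of_real 0) = cosh (D / 2)" using cosh_hdist[OF qd z] hq0 by simp
  also have "cosh (D / 2) \<le> cosh \<rho>" using rho D cosh_real_nonneg_le_iff[of "D/2" \<rho>] by simp
  finally have h1: "harg q (complex_of_real (P q)) < cosh \<rho>" .
  have h2: "harg (- q) (complex_of_real (P (- q))) < cosh \<rho>"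
    using h1 harg_neg[of q "complex_of_real (P q)"] by (simp add: P_neg)
  have am: "artanh (P (- q)) = - artanh (P q)" unfolding P_neg using pq1 by (simp add: abs_less_iff)
  have apos: "artanh (P q) > 0"
    using tanh_artanh_real[OF pq1] Ppos by (metis tanh_real_pos_iff)
  have alt: "artanh (P q) < \<delta> / 4"
  proof (rule ccontr)
    assume "\<not> artanh (P q) < \<delta> / 4"
    then have "tanh (\<delta> / 4) \<le> tanh (artanh (P q))" by simp
    then have "td \<le> P q" using tanh_artanh_real[OF pq1] by (simp add: td_def)
    then show False using Ple ctd td0 by linarith
  qed
  have "2 * artanh (P q) - 2 * artanh (P (- q)) = 4 * artanh (P q)" using am by simp
  then show ?thesis using qd nqd hq h1 h2 apos alt
    by (intro exI[of _ q]) simp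
qed



lemma P_den_pos: "1 + (cmod u)^2 + sqrt ((1 + (cmod u)^2)^2 - 4 * (Re u)^2) > 0"
proof -
  have "(1 - cmod u)^2 \<ge> 0" by simp
  then have "2 * cmod u \<le> 1 + (cmod u)^2" by (simp add: power2_eq_square algebra_simps)
  moreover have "\<bar>Re u\<bar> \<le> cmod u" by (rule abs_Re_le_cmod)
  ultimately have "(2 * \<bar>Re u\<bar>)^2 \<le> (1 + (cmod u)^2)^2" by (intro power_mono) auto
  then have "4 * (Re u)^2 \<le> (1 + (cmod u)^2)^2" by (simp add: power_mult_distrib)
  then have "sqrt ((1 + (cmod u)^2)^2 - 4 * (Re u)^2) \<ge> 0" by simp
  moreover have "1 + (cmod u)^2 > 0" by (simp add: add_pos_nonneg)
  ultimately show ?thesis by linarith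
qed

lemma isCont_P: "isCont P u"
proof -
  have "isCont (\<lambda>u. 2 * Re u / ((1 + (cmod u)^2) + sqrt ((1 + (cmod u)^2)^2 - 4 * (Re u)^2))) u"
    using P_den_pos[of u] by (intro continuous_intros) auto
  then show ?thesis unfolding P_def[abs_def] .
qed

lemma isCont_harg:
  assumes "isCont A x" "isCont B x" "A x \<in> disc" "B x \<in> disc"
  shows "isCont (\<lambda>x. harg (A x) (B x)) x"
proof -
  have "(cmod (A x))^2 < 1" "(cmod (B x))^2 < 1" using disc_sq assms(3,4) by auto
  then have "(1 - (cmod (A x))^2) * (1 - (cmod (B x))^2) \<noteq> 0" by auto
  then show ?thesis unfolding harg_def using assms(1,2) by (intro continuous_intros) auto
qed

lemma den_nz: "w \<in> disc \<Longrightarrow> y \<in> disc \<Longrightarrow> 1 - cnj w * y \<noteq> 0"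
proof
  assume w: "w \<in> disc" and y: "y \<in> disc" and e: "1 - cnj w * y = 0"
  then have "cmod (cnj w * y) = 1" by (metis eq_iff_diff_eq_0 norm_one)
  moreover have "cmod (cnj w * y) < 1" using w y
    by (simp add: norm_mult disc_iff) (metis mult_strict_mono' norm_ge_zero mult_1_right less_le_trans not_less order.strict_iff_not)
  ultimately show False by simp
qed

lemma isCont_Tf:
  assumes "v \<noteq> 0" "1 - cnj w * y \<noteq> 0"
  shows "isCont (\<lambda>p. Tf (fst p) (snd p) y) (w, v)"
  unfolding Tf_def using assms by (intro continuous_intros) auto

lemma open_nbhd: "isCont f x \<Longrightarrow> open S \<Longrightarrow> f x \<in> S \<Longrightarrow> \<exists>U. open U \<and> x \<in> U \<and> (\<forall>y\<in>U. f y \<in> S)"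
  using continuous_at_open by blast

lemma part2:
  assumes fu: "fuchsian G" and cc: "cocompact G" and x: "x \<in> disc" and k: "unit_geodesic \<kappa>"
    and dense: "dense_geodesic G \<kappa>" and ir: "inj_rad G x \<le> \<rho>" and dl: "\<delta> > 0"
  shows "\<not> separated \<delta> (Splus G \<kappa> \<rho> x)"
proof -
  obtain c where c: "c \<in> G" "c x \<noteq> x" and hc: "hdist (c x) x = 2 * inj_rad G x"
    using inj_attained[OF fu cc x] by blast
  define y1 where "y1 = c x"
  define y2 where "y2 = x"
  have y1d: "y1 \<in> disc" and y2d: "y2 \<in> disc" using fu_disc[OF fu c(1) x] x by (auto simp: y1_def y2_def)
  define D where "D = hdist y1 y2"
  have D0: "D > 0" using hdist_nonneg[OF y1d y2d] hdist_zero_iff[OF y1d y2d] c(2)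
    by (simp add: D_def y1_def y2_def less_le)
  have Dr: "D / 2 \<le> \<rho>" using hc ir by (simp add: D_def y1_def y2_def)
  obtain q where qd: "q \<in> disc" and nqd: "- q \<in> disc" and hq: "hdist q (- q) = D"
    and h1: "harg q (complex_of_real (P q)) < cosh \<rho>" and h2: "harg (- q) (complex_of_real (P (- q))) < cosh \<rho>"
    and d1: "2 * artanh (P q) - 2 * artanh (P (- q)) \<noteq> 0"
    and d2: "\<bar>2 * artanh (P q) - 2 * artanh (P (- q))\<bar> < \<delta>"
    using config[OF D0 Dr dl] by blast
  have yne: "y1 \<noteq> y2" using c(2) by (simp add: y1_def y2_def)
  obtain \<alpha> \<beta> where na: "nrm \<alpha> \<beta>" and m1: "moeb \<alpha> \<beta> y1 = q" and m2: "moeb \<alpha> \<beta> y2 = - q"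
    using transport[OF y1d y2d qd nqd yne] hq D_def by metis
  define ws where "ws = - \<beta> / \<alpha>"
  define vs where "vs = 1 / (2 * \<alpha>^2)"
  have a0: "\<alpha> \<noteq> 0" using nrm_less[OF na] by auto
  have Tfs: "Tf ws vs y = moeb \<alpha> \<beta> y" if "y \<in> disc" for y
    using Tf_eq[OF nrm_inv[OF na] that] by (simp add: ws_def vs_def)
  have wsd: "ws \<in> disc" using nrm_less[OF na] a0 by (simp add: ws_def disc_iff norm_divide)
  have vs0: "vs \<noteq> 0" using a0 by (simp add: vs_def)
  have ut: "(ws, vs) \<in> unit_tangent"
  proof -
    have A: "(cmod \<alpha>)^2 - (cmod \<beta>)^2 = 1" using na by (simp add: nrm_def)
    have A0: "cmod \<alpha> > 0" using a0 by simp
    have "(cmod ws)^2 = (cmod \<beta>)^2 / (cmod \<alpha>)^2" by (simp add: ws_def norm_divide power_divide)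
    then have "1 - (cmod ws)^2 = ((cmod \<alpha>)^2 - (cmod \<beta>)^2) / (cmod \<alpha>)^2"
      using A0 by (simp add: diff_divide_distrib)
    then have "1 - (cmod ws)^2 = 1 / (cmod \<alpha>)^2" using A by simp
    moreover have "cmod vs = 1 / (2 * (cmod \<alpha>)^2)" by (simp add: vs_def norm_divide norm_mult norm_power)
    moreover have "(cmod ws)^2 < 1" using disc_sq[OF wsd] .
    ultimately show ?thesis using wsd A0 by (simp add: unit_tangent_def)
  qed
  define T1 where "T1 p = Tf (fst p) (snd p) y1" for p :: "complex \<times> complex"
  define T2 where "T2 p = Tf (fst p) (snd p) y2" for p :: "complex \<times> complex"
  have T1s: "T1 (ws, vs) = q" using Tfs[OF y1d] m1 by (simp add: T1_def)
  have T2s: "T2 (ws, vs) = - q" using Tfs[OF y2d] m2 by (simp add: T2_def)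
  have cT1: "isCont T1 (ws, vs)" unfolding T1_def[abs_def] by (rule isCont_Tf[OF vs0 den_nz[OF wsd y1d]])
  have cT2: "isCont T2 (ws, vs)" unfolding T2_def[abs_def] by (rule isCont_Tf[OF vs0 den_nz[OF wsd y2d]])
  have cP1: "isCont (\<lambda>p. P (T1 p)) (ws, vs)" by (rule isCont_o2[OF cT1 isCont_P])
  have cP2: "isCont (\<lambda>p. P (T2 p)) (ws, vs)" by (rule isCont_o2[OF cT2 isCont_P])
  have pq1: "\<bar>P q\<bar> < 1" and pq2: "\<bar>P (- q)\<bar> < 1" using P_facts(1) qd nqd by auto
  have cF1: "isCont (\<lambda>p. harg (T1 p) (complex_of_real (P (T1 p)))) (ws, vs)"
    by (rule isCont_harg) (use cT1 cP1 T1s qd of_real_disc[OF pq1] in \<open>auto intro: continuous_intros\<close>)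
  have cF2: "isCont (\<lambda>p. harg (T2 p) (complex_of_real (P (T2 p)))) (ws, vs)"
    by (rule isCont_harg) (use cT2 cP2 T2s nqd of_real_disc[OF pq2] in \<open>auto intro: continuous_intros\<close>)
  have cF3: "isCont (\<lambda>p. 2 * artanh (P (T1 p)) - 2 * artanh (P (T2 p))) (ws, vs)"
    using cP1 cP2 pq1 pq2 T1s T2s by (intro continuous_intros) (auto simp: abs_less_iff)
  obtain U1 where U1: "open U1" "(ws, vs) \<in> U1" "\<forall>p\<in>U1. harg (T1 p) (complex_of_real (P (T1 p))) \<in> {..<cosh \<rho>}"
    using open_nbhd[OF cF1, of "{..<cosh \<rho>}"] h1 T1s by auto
  obtain U2 where U2: "open U2" "(ws, vs) \<in> U2" "\<forall>p\<in>U2. harg (T2 p) (complex_of_real (P (T2 p))) \<in> {..<cosh \<rho>}"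
    using open_nbhd[OF cF2, of "{..<cosh \<rho>}"] h2 T2s by auto
  have oS: "open ({-\<delta><..<\<delta>} - {0::real})" by (intro open_Diff) auto
  obtain U3 where U3: "open U3" "(ws, vs) \<in> U3" "\<forall>p\<in>U3. 2 * artanh (P (T1 p)) - 2 * artanh (P (T2 p)) \<in> {-\<delta><..<\<delta>} - {0}"
    using open_nbhd[OF cF3 oS] d1 d2 T1s T2s by (auto simp: abs_less_iff)
  define U where "U = U1 \<inter> U2 \<inter> U3"
  have oU: "open U" and inU: "(ws, vs) \<in> U" using U1 U2 U3 by (auto simp: U_def)
  let ?DS = "{(g (\<kappa> t), deriv g (\<kappa> t) * vector_derivative \<kappa> (at t)) | g t. g \<in> G}"
  have "(ws, vs) \<in> closure ?DS" using dense ut unfolding dense_geodesic_def by blast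
  then have "U \<inter> closure ?DS \<noteq> {}" using inU by blast
  then have "U \<inter> ?DS \<noteq> {}" using open_Int_closure_eq_empty[OF oU] by blast
  then obtain g t where g: "g \<in> G" and pU: "(g (\<kappa> t), deriv g (\<kappa> t) * vector_derivative \<kappa> (at t)) \<in> U"
    by blast
  define w where "w = g (\<kappa> t)"
  define v where "v = deriv g (\<kappa> t) * vector_derivative \<kappa> (at t)"
  note tt = tangent_transfer[OF fu g k w_def v_def]
  obtain kk where kk: "kk \<in> G" "\<forall>z\<in>disc. kk (g z) = z \<and> g (kk z) = z" using fu_inv[OF fu g] by blast
  obtain m where m: "m \<in> G" "\<forall>z\<in>disc. m z = kk (c z)" using fu_comp[OF fu kk(1) c(1)] by blast
  define z1 where "z1 = kk y1"
  define z2 where "z2 = kk y2"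
  have "kk (c x) = m x" using m x by simp
  then have z1o: "z1 \<in> orbit G x" using m(1) unfolding orbit_def z1_def y1_def by (intro image_eqI[of _ _ m]) auto
  have z2o: "z2 \<in> orbit G x" using kk(1) unfolding orbit_def z2_def y2_def by force
  have z1d: "z1 \<in> disc" and z2d: "z2 \<in> disc" using fu_disc[OF fu kk(1)] y1d y2d by (auto simp: z1_def z2_def)
  have gz1: "g z1 = y1" and gz2: "g z2 = y2" using kk y1d y2d by (auto simp: z1_def z2_def)
  define u1 where "u1 = Tf w v y1"
  define u2 where "u2 = Tf w v y2"
  have u1d: "u1 \<in> disc" and u2d: "u2 \<in> disc" using tt(4) y1d y2d by (auto simp: u1_def u2_def)
  have hz1: "\<And>s. hdist z1 (\<kappa> s) = hdist u1 (tc (s - t))"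
  proof -
    fix s
    have "hdist z1 (\<kappa> s) = hdist (g z1) (g (\<kappa> s))"
      using fu_hdist[OF fu g z1d unit_geodesic_disc[OF k]] by simp
    then show "hdist z1 (\<kappa> s) = hdist u1 (tc (s - t))" using tt(3)[OF y1d] gz1 by (simp add: u1_def)
  qed
  have hz2: "\<And>s. hdist z2 (\<kappa> s) = hdist u2 (tc (s - t))"
  proof -
    fix s
    have "hdist z2 (\<kappa> s) = hdist (g z2) (g (\<kappa> s))"
      using fu_hdist[OF fu g z2d unit_geodesic_disc[OF k]] by simp
    then show "hdist z2 (\<kappa> s) = hdist u2 (tc (s - t))" using tt(3)[OF y2d] gz2 by (simp add: u2_def)
  qed
  have pT: "T1 (w, v) = u1" "T2 (w, v) = u2" by (simp_all add: T1_def T2_def u1_def u2_def)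
  have wvU: "(w, v) \<in> U" using pU by (simp add: w_def v_def)
  have F1: "harg u1 (complex_of_real (P u1)) < cosh \<rho>" using U1(3) wvU pT by (auto simp: U_def)
  have F2: "harg u2 (complex_of_real (P u2)) < cosh \<rho>" using U2(3) wvU pT by (auto simp: U_def)
  have F3: "2 * artanh (P u1) - 2 * artanh (P u2) \<in> {-\<delta><..<\<delta>} - {0}" using U3(3) wvU pT by (auto simp: U_def)
  have pu1: "\<bar>P u1\<bar> < 1" and pu2: "\<bar>P u2\<bar> < 1" using P_facts(1) u1d u2d by auto
  have dg1: "dist_geo \<kappa> z1 < \<rho>"
  proof -
    have "dist_geo \<kappa> z1 = arcosh (harg u1 (complex_of_real (P u1)))"
      using proj_transfer(2)[OF u1d hz1] by (simp add: hdist_harg)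
    also have "\<dots> < arcosh (cosh \<rho>)"
      using F1 harg_ge1[OF u1d of_real_disc[OF pu1]] by (intro arcosh_real_strict_mono) auto
    also have "\<dots> = \<rho>" using D0 Dr by (intro arcosh_cosh_real) simp
    finally show ?thesis .
  qed
  have dg2: "dist_geo \<kappa> z2 < \<rho>"
  proof -
    have "dist_geo \<kappa> z2 = arcosh (harg u2 (complex_of_real (P u2)))"
      using proj_transfer(2)[OF u2d hz2] by (simp add: hdist_harg)
    also have "\<dots> < arcosh (cosh \<rho>)"
      using F2 harg_ge1[OF u2d of_real_disc[OF pu2]] by (intro arcosh_real_strict_mono) auto
    also have "\<dots> = \<rho>" using D0 Dr by (intro arcosh_cosh_real) simp
    finally show ?thesis .
  qed
  have s1: "t + 2 * artanh (P u1) \<in> Splus G \<kappa> \<rho> x"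
    unfolding Splus_def using z1o z1d dg1 proj_transfer(1)[OF u1d hz1]
    by (intro image_eqI[of _ _ z1]) (auto simp: nbhd_plus_def)
  have s2: "t + 2 * artanh (P u2) \<in> Splus G \<kappa> \<rho> x"
    unfolding Splus_def using z2o z2d dg2 proj_transfer(1)[OF u2d hz2]
    by (intro image_eqI[of _ _ z2]) (auto simp: nbhd_plus_def)
  have ne: "t + 2 * artanh (P u1) \<noteq> t + 2 * artanh (P u2)" using F3 by auto
  have lt: "\<bar>(t + 2 * artanh (P u1)) - (t + 2 * artanh (P u2))\<bar> < \<delta>" using F3 by (auto simp: abs_less_iff)
  show ?thesis unfolding separated_def using s1 s2 ne lt by force
qed


theorem lemma3p2:
  fixes \<Gamma> :: "(complex \<Rightarrow> complex) set" and \<tau> :: "complex set" and Sd :: "complex set set"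
    and \<kappa> :: "real \<Rightarrow> complex" and x :: complex and \<rho> :: real
  assumes "fuchsian \<Gamma>" and "cocompact \<Gamma>"
    and "fundamental_domain \<Gamma> \<tau>" and "hpolygon \<tau> Sd" and "pairing_no_involution \<Gamma> \<tau> Sd"
    and "unit_geodesic \<kappa>" and "dense_geodesic \<Gamma> \<kappa>"
    and "x \<in> interior \<tau>" and "\<rho> > 0"
  shows "(\<rho> < inj_rad \<Gamma> x \<longrightarrow> separated (2 * (inj_rad \<Gamma> x - \<rho>)) (Splus \<Gamma> \<kappa> \<rho> x))
       \<and> (inj_rad \<Gamma> x \<le> \<rho> \<longrightarrow> (\<forall>\<delta>>0. \<not> separated \<delta> (Splus \<Gamma> \<kappa> \<rho> x)))"
proof -
  have xd: "x \<in> disc" using assms(3,8) interior_subset unfolding fundamental_domain_def by blast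
  show ?thesis using part1[OF assms(1) xd assms(6)] part2[OF assms(1,2) xd assms(6,7)] by blast
qed

end
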